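(* Let $N\subset\mathbb{R}^3$ be an open set with coordinates $(t,x,y)$ and metric $g_f^{\varepsilon}=\varepsilon\,dx^2+f(x,y)\,dy^2+2\,dt\,dy$ ($\varepsilon=\pm1$, $f$ smooth), with orthonormal frame $$e_1=\partial_x,\quad e_2=\tfrac{2-f}{2\sqrt2}\partial_t+\tfrac1{\sqrt2}\partial_y,\quad e_3=\tfrac{2+f}{2\sqrt2}\partial_t-\tfrac1{\sqrt2}\partial_y.$$ Let $\Sigma\subset N$ be a non-degenerate totally umbilical surface with unit normal $\mathcal{V}=v_1e_1+v_2e_2+v_3e_3$, where $v_i\in C^\infty(\Sigma)$ and $\varepsilon v_1^2+v_2^2-v_3^2=\delta=\pm1$, and assume $v_1\neq0$ on $\Sigma$. Then $$v_3(v_2-v_3)^2f_{xxx}=0$$ on $\Sigma$. Hence at each point of $\Sigma$ there is a small neighbourhood in which one or more of $f_{xxx}=0$, $v_3=0$, $v_2=v_3$ must occur.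
   Context: $\langle e_1,e_1\rangle=\varepsilon$, $\langle e_2,e_2\rangle=1$, $\langle e_3,e_3\rangle=-1$. A surface is non-degenerate if its induced metric is Riemannian or Lorentzian. With $\overline{\nabla}$ the Levi-Civita connection of $g_f^\varepsilon$, $\Sigma$ is totally umbilical if there is $\lambda\in C^\infty(\Sigma)$ with $-\overline{\nabla}_T\mathcal{V}=\lambda T$ for all $T$ tangent to $\Sigma$. Here $f_{xxx}$ is evaluated at the points of $\Sigma$. *)

theory Defs
  imports "HOL-Analysis.Analysis"
begin

fun Ck_on :: "nat \<Rightarrow> 'a::euclidean_space set \<Rightarrow> ('a \<Rightarrow> 'b::real_normed_vector) \<Rightarrow> bool" where
  "Ck_on 0 S h = continuous_on S h"
| "Ck_on (Suc k) S h =
     (h differentiable_on S \<and> (\<forall>b\<in>Basis. Ck_on k S (\<lambda>x. frechet_derivative h (at x) b)))"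

definition smooth_fun_on :: "'a::euclidean_space set \<Rightarrow> ('a \<Rightarrow> 'b::real_normed_vector) \<Rightarrow> bool" where
  "smooth_fun_on S h = (\<forall>k. Ck_on k S h)"

definition pd :: "'n::finite \<Rightarrow> (real^'n \<Rightarrow> 'b::real_normed_vector) \<Rightarrow> real^'n \<Rightarrow> 'b" where
  "pd i h p = frechet_derivative h (at p) (axis i 1)"

section \<open>The metric g_f^eps on R^3 with coordinates (t,x,y) = (p$1, p$2, p$3)\<close>

definition xy :: "real^3 \<Rightarrow> real^2" where
  "xy p = vector [p$2, p$3]"

definition metric_g :: "real \<Rightarrow> (real^2 \<Rightarrow> real) \<Rightarrow> real^3 \<Rightarrow> real^3^3" where
  "metric_g eps f p = (\<chi> i j. if (i = 1 \<and> j = 3) \<or> (i = 3 \<and> j = 1) then 1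
                         else if i = 2 \<and> j = 2 then eps
                         else if i = 3 \<and> j = 3 then f (xy p) else 0)"

definition gprod :: "real \<Rightarrow> (real^2 \<Rightarrow> real) \<Rightarrow> real^3 \<Rightarrow> real^3 \<Rightarrow> real^3 \<Rightarrow> real" where
  "gprod eps f p w z = w \<bullet> (metric_g eps f p *v z)"

definition christoffel :: "real \<Rightarrow> (real^2 \<Rightarrow> real) \<Rightarrow> 3 \<Rightarrow> 3 \<Rightarrow> 3 \<Rightarrow> real^3 \<Rightarrow> real" where
  "christoffel eps f k i j p =
     (1/2) * (\<Sum>l\<in>UNIV. matrix_inv (metric_g eps f p) $ k $ l *
        (pd i (\<lambda>q. metric_g eps f q $ j $ l) p + pd j (\<lambda>q. metric_g eps f q $ i $ l) p
         - pd l (\<lambda>q. metric_g eps f q $ i $ j) p))"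

definition covD :: "real \<Rightarrow> (real^2 \<Rightarrow> real) \<Rightarrow> (real^2 \<Rightarrow> real^3) \<Rightarrow> (real^2 \<Rightarrow> real^3)
                     \<Rightarrow> real^2 \<Rightarrow> real^2 \<Rightarrow> real^3" where
  "covD eps f phi V u w =
     frechet_derivative V (at u) w +
     (\<chi> k. \<Sum>i\<in>UNIV. \<Sum>j\<in>UNIV. christoffel eps f k i j (phi u)
                    * (frechet_derivative phi (at u) w) $ i * (V u) $ j)"

definition e1 :: "real^3" where "e1 = axis 2 1"

definition e2 :: "(real^2 \<Rightarrow> real) \<Rightarrow> real^3 \<Rightarrow> real^3" where
  "e2 f p = vector [(2 - f (xy p)) / (2 * sqrt 2), 0, 1 / sqrt 2]"

definition e3 :: "(real^2 \<Rightarrow> real) \<Rightarrow> real^3 \<Rightarrow> real^3" where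
  "e3 f p = vector [(2 + f (xy p)) / (2 * sqrt 2), 0, - 1 / sqrt 2]"

definition normal_field :: "(real^2 \<Rightarrow> real) \<Rightarrow> (real^2 \<Rightarrow> real^3)
     \<Rightarrow> (real^2 \<Rightarrow> real) \<Rightarrow> (real^2 \<Rightarrow> real) \<Rightarrow> (real^2 \<Rightarrow> real) \<Rightarrow> real^2 \<Rightarrow> real^3" where
  "normal_field f phi v1 v2 v3 u =
     v1 u *\<^sub>R e1 + v2 u *\<^sub>R e2 f (phi u) + v3 u *\<^sub>R e3 f (phi u)"

definition induced :: "real \<Rightarrow> (real^2 \<Rightarrow> real) \<Rightarrow> (real^2 \<Rightarrow> real^3) \<Rightarrow> real^2 \<Rightarrow> real^2 \<Rightarrow> real^2 \<Rightarrow> real" where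
  "induced eps f phi u w z =
     gprod eps f (phi u) (frechet_derivative phi (at u) w) (frechet_derivative phi (at u) z)"

definition riemannian_at where
  "riemannian_at eps f phi u = (\<forall>w. w \<noteq> 0 \<longrightarrow> induced eps f phi u w w > 0)"

text \<open>Lorentzian in dimension 2: non-degenerate of signature (1,1).\<close>
definition lorentzian_at where
  "lorentzian_at eps f phi u =
     ((\<exists>w. induced eps f phi u w w > 0) \<and> (\<exists>w. induced eps f phi u w w < 0) \<and>
      (\<forall>w. (\<forall>z. induced eps f phi u w z = 0) \<longrightarrow> w = 0))"

end

theory Submission
  imports Defs
begin


abbreviation dd where "dd h v x \<equiv> frechet_derivative h (at x) v"




lemma smooth_Ck: "smooth_fun_on S h \<Longrightarrow> Ck_on k S h"
  by (simp add: smooth_fun_on_def)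

lemma Ck_cont: "Ck_on k S h \<Longrightarrow> continuous_on S h"
  by (cases k) (simp_all add: differentiable_imp_continuous_on)

lemma Ck_diff: "Ck_on (Suc k) S h \<Longrightarrow> open S \<Longrightarrow> x \<in> S \<Longrightarrow> h differentiable (at x)"
  by (simp add: differentiable_on_eq_differentiable_at)

lemma smooth_diff: "smooth_fun_on S h \<Longrightarrow> open S \<Longrightarrow> x \<in> S \<Longrightarrow> h differentiable (at x)"
  using Ck_diff[of 0 S h] smooth_Ck by blast

lemma smooth_dd: "smooth_fun_on S h \<Longrightarrow> b \<in> Basis \<Longrightarrow> smooth_fun_on S (\<lambda>x. dd h b x)"
  unfolding smooth_fun_on_def
proof
  fix k assume "\<forall>k. Ck_on k S h" "b \<in> Basis"
  then have "Ck_on (Suc k) S h" by blast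
  then show "Ck_on k S (\<lambda>x. dd h b x)" using \<open>b \<in> Basis\<close> by simp
qed

lemma Ck_cong: "open S \<Longrightarrow> (\<And>x. x \<in> S \<Longrightarrow> g x = g' x) \<Longrightarrow> Ck_on k S g \<Longrightarrow> Ck_on k S g'"
proof (induction k arbitrary: g g')
  case 0
  then show ?case using continuous_on_eq[of S g g'] by (metis Ck_on.simps(1))
next
  case (Suc k)
  have d: "g differentiable_on S" using Suc.prems by simp
  have d': "g' differentiable_on S"
    unfolding differentiable_on_eq_differentiable_at[OF Suc.prems(1)]
  proof
    fix x assume x: "x \<in> S"
    then have "g differentiable at x" using d Suc.prems(1) differentiable_on_eq_differentiable_at by blast
    then obtain D where "(g has_derivative D) (at x)" by (auto simp: differentiable_def)
    then have "(g' has_derivative D) (at x)"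
      by (rule has_derivative_transform_within_open[OF _ Suc.prems(1) x Suc.prems(2)])
    then show "g' differentiable at x" by (auto simp: differentiable_def)
  qed
  have "Ck_on k S (\<lambda>x. dd g' b x)" if b: "b \<in> Basis" for b
  proof -
    have "Ck_on k S (\<lambda>x. dd g b x)" using Suc.prems b by simp
    moreover have "dd g b x = dd g' b x" if "x \<in> S" for x
    proof -
      have "g differentiable at x" using d Suc.prems(1) that differentiable_on_eq_differentiable_at by blast
      then show ?thesis using frechet_derivative_transform_within_open[OF _ Suc.prems(1) that Suc.prems(2)] by simp
    qed
    ultimately show ?thesis by (rule Suc.IH[OF Suc.prems(1), rotated])
  qed
  then show ?case using d' by simp
qed

lemma dd_component:
  fixes h :: "'a::real_normed_vector \<Rightarrow> real^'n"
  assumes "h differentiable (at x)"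
  shows "dd (\<lambda>y. h y $ i) v x = dd h v x $ i"
    and "(\<lambda>y. h y $ i) differentiable (at x)"
proof -
  have "((\<lambda>y. h y $ i) has_derivative (\<lambda>w. frechet_derivative h (at x) w $ i)) (at x)"
    using bounded_linear.has_derivative[OF bounded_linear_vec_nth frechet_derivative_works[THEN iffD1, OF assms]] .
  then show "dd (\<lambda>y. h y $ i) v x = dd h v x $ i" "(\<lambda>y. h y $ i) differentiable (at x)"
    using frechet_derivative_at differentiableI by (metis, blast)
qed

lemma Ck_component:
  fixes h :: "'a::euclidean_space \<Rightarrow> real^'n"
  shows "open S \<Longrightarrow> Ck_on k S h \<Longrightarrow> Ck_on k S (\<lambda>x. h x $ i)"
proof (induction k arbitrary: h)
  case 0
  then show ?case by (simp add: continuous_on_component)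
next
  case (Suc k)
  have dx: "h differentiable (at x)" if "x \<in> S" for x using Ck_diff Suc.prems that by blast
  have "Ck_on k S (\<lambda>x. dd (\<lambda>y. h y $ i) b x)" if b: "b \<in> Basis" for b
  proof (rule Ck_cong[OF Suc.prems(1)])
    have "Ck_on k S (\<lambda>x. dd h b x)" using Suc.prems(2) b by simp
    then show "Ck_on k S (\<lambda>x. dd h b x $ i)" by (rule Suc.IH[OF Suc.prems(1)])
    show "dd h b x $ i = dd (\<lambda>y. h y $ i) b x" if "x \<in> S" for x
      using dd_component(1)[OF dx[OF that]] by simp
  qed
  moreover have "(\<lambda>x. h x $ i) differentiable_on S"
    unfolding differentiable_on_eq_differentiable_at[OF Suc.prems(1)]
    using dd_component(2)[OF dx] by simp
  ultimately show ?case by simp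
qed

lemma smooth_component:
  fixes h :: "'a::euclidean_space \<Rightarrow> real^'n"
  shows "open S \<Longrightarrow> smooth_fun_on S h \<Longrightarrow> smooth_fun_on S (\<lambda>x. h x $ i)"
  unfolding smooth_fun_on_def by (simp add: Ck_component)

lemma xy_linear: "linear xy"
  unfolding xy_def by (rule linearI) (auto simp: vec_eq_iff forall_2)

lemma xy_comp: "xy w = (w$2) *\<^sub>R axis 1 1 + (w$3) *\<^sub>R axis 2 1"
  unfolding xy_def by (auto simp: vec_eq_iff forall_2 axis_def)

lemma xy_open: "open N \<Longrightarrow> open (xy ` N)"
proof (rule open_surjective_linear_image[OF _ xy_linear])
  show "surj xy"
  proof (rule surjI)
    fix z :: "real^2" show "xy (vector [0, z$1, z$2]) = z"
      unfolding xy_def by (auto simp: vec_eq_iff forall_2)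
  qed
qed

lemma chain_xy:
  fixes h :: "real^2 \<Rightarrow> real" and phi :: "real^2 \<Rightarrow> real^3"
  assumes hd: "h differentiable at (xy (phi u))" and pdf: "phi differentiable at u"
  shows "dd (\<lambda>x. h (xy (phi x))) v u = dd (\<lambda>x. phi x $ 2) v u * pd 1 h (xy (phi u))
           + dd (\<lambda>x. phi x $ 3) v u * pd 2 h (xy (phi u))"
    and "(\<lambda>x. h (xy (phi x))) differentiable at u"
proof -
  have lx: "bounded_linear xy" using xy_linear linear_conv_bounded_linear by blast
  have d1: "((\<lambda>x. xy (phi x)) has_derivative (\<lambda>w. xy (dd phi w u))) (at u)"
    using bounded_linear.has_derivative[OF lx frechet_derivative_works[THEN iffD1, OF pdf]] .
  have d2: "((\<lambda>x. h (xy (phi x))) has_derivative (\<lambda>w. dd h (xy (dd phi w u)) (xy (phi u)))) (at u)"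
    using diff_chain_at[OF d1 frechet_derivative_works[THEN iffD1, OF hd]] by (simp add: o_def)
  then show "(\<lambda>x. h (xy (phi x))) differentiable at u" using differentiableI by blast
  have lin: "linear (frechet_derivative h (at (xy (phi u))))" using linear_frechet_derivative[OF hd] .
  have "dd (\<lambda>x. h (xy (phi x))) v u = dd h (xy (dd phi v u)) (xy (phi u))"
    using frechet_derivative_at[OF d2] by metis
  also have "\<dots> = (dd phi v u $ 2) * pd 1 h (xy (phi u)) + (dd phi v u $ 3) * pd 2 h (xy (phi u))"
    unfolding xy_comp[of "dd phi v u"] pd_def linear_add[OF lin] linear_scale[OF lin] by simp
  finally show "dd (\<lambda>x. h (xy (phi x))) v u = dd (\<lambda>x. phi x $ 2) v u * pd 1 h (xy (phi u))
           + dd (\<lambda>x. phi x $ 3) v u * pd 2 h (xy (phi u))"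
    by (simp only: dd_component(1)[OF pdf])
qed




lemma line_deriv:
  fixes g :: "'a::real_normed_vector \<Rightarrow> real"
  assumes dg: "g differentiable at (p + s *\<^sub>R v)"
  shows "((\<lambda>s. g (p + s *\<^sub>R v)) has_real_derivative dd g v (p + s *\<^sub>R v)) (at s)"
proof -
  have d1: "((\<lambda>s. p + s *\<^sub>R v) has_derivative (\<lambda>t. t *\<^sub>R v)) (at s)"
    by (auto intro!: derivative_eq_intros)
  have d2: "((\<lambda>s. g (p + s *\<^sub>R v)) has_derivative (\<lambda>t. dd g (t *\<^sub>R v) (p + s *\<^sub>R v))) (at s)"
    using diff_chain_at[OF d1 frechet_derivative_works[THEN iffD1, OF dg]] by (simp add: o_def)
  have "(\<lambda>t. dd g (t *\<^sub>R v) (p + s *\<^sub>R v)) = (\<lambda>t. dd g v (p + s *\<^sub>R v) * t)"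
    using linear_scale[OF linear_frechet_derivative[OF dg]] by (auto simp: mult.commute)
  then show ?thesis using d2 by (simp add: has_field_derivative_def)
qed

lemma mvt_mixed:
  fixes g :: "'a::euclidean_space \<Rightarrow> real"
  assumes U: "open U" and C2: "Ck_on 2 U g" and a: "a \<in> Basis" and b: "b \<in> Basis" and h: "0 < h"
    and box: "\<And>s t. 0 \<le> s \<Longrightarrow> s \<le> h \<Longrightarrow> 0 \<le> t \<Longrightarrow> t \<le> h \<Longrightarrow> u + s *\<^sub>R a + t *\<^sub>R b \<in> U"
  shows "\<exists>s t. 0 < s \<and> s < h \<and> 0 < t \<and> t < h \<and>
     g (u + h *\<^sub>R a + h *\<^sub>R b) - g (u + h *\<^sub>R a) - g (u + h *\<^sub>R b) + g u
       = h * h * dd (\<lambda>x. dd g a x) b (u + s *\<^sub>R a + t *\<^sub>R b)"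
proof -
  have dg: "g differentiable at x" if "x \<in> U" for x
    using C2 U that by (simp add: numeral_2_eq_2 differentiable_on_eq_differentiable_at)
  have dg1: "(\<lambda>x. dd g a x) differentiable at x" if "x \<in> U" for x
    using C2 U that a by (simp add: numeral_2_eq_2 differentiable_on_eq_differentiable_at)
  define \<phi> where "\<phi> s = g ((u + h *\<^sub>R b) + s *\<^sub>R a) - g (u + s *\<^sub>R a)" for s
  define \<phi>' where "\<phi>' s = dd g a ((u + h *\<^sub>R b) + s *\<^sub>R a) - dd g a (u + s *\<^sub>R a)" for s
  have "(\<phi> has_real_derivative \<phi>' s) (at s)" if "0 \<le> s" "s \<le> h" for s
  proof -
    have eq: "(u + h *\<^sub>R b) + s *\<^sub>R a = u + s *\<^sub>R a + h *\<^sub>R b" by (simp add: algebra_simps)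
    have mem: "u + s *\<^sub>R a + h *\<^sub>R b \<in> U" using box[of s h] that h by simp
    have i1: "(u + h *\<^sub>R b) + s *\<^sub>R a \<in> U" by (subst eq) (rule mem)
    have i2: "u + s *\<^sub>R a \<in> U" using box[of s 0] that h by simp
    show ?thesis unfolding \<phi>_def \<phi>'_def
      by (intro DERIV_diff line_deriv dg i1 i2)
  qed
  from MVT2[OF h this] obtain s1 where s1: "0 < s1" "s1 < h" "\<phi> h - \<phi> 0 = (h - 0) * \<phi>' s1"
    by auto
  define \<psi> where "\<psi> t = dd g a ((u + s1 *\<^sub>R a) + t *\<^sub>R b)" for t
  have "(\<psi> has_real_derivative dd (\<lambda>x. dd g a x) b ((u + s1 *\<^sub>R a) + t *\<^sub>R b)) (at t)"
    if "0 \<le> t" "t \<le> h" for t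
    unfolding \<psi>_def using box[of s1 t] that s1 by (intro line_deriv dg1) simp
  from MVT2[OF h this] obtain t1 where t1: "0 < t1" "t1 < h"
    "\<psi> h - \<psi> 0 = (h - 0) * dd (\<lambda>x. dd g a x) b ((u + s1 *\<^sub>R a) + t1 *\<^sub>R b)"
    by auto
  have e1: "(u + h *\<^sub>R b) + s1 *\<^sub>R a = (u + s1 *\<^sub>R a) + h *\<^sub>R b" by (simp add: algebra_simps)
  have "\<phi>' s1 = \<psi> h - \<psi> 0" unfolding \<phi>'_def \<psi>_def e1 by simp
  moreover have "\<phi> h - \<phi> 0 = g (u + h *\<^sub>R a + h *\<^sub>R b) - g (u + h *\<^sub>R a) - g (u + h *\<^sub>R b) + g u"
    unfolding \<phi>_def by (simp add: algebra_simps)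
  ultimately show ?thesis using s1 t1 by (intro exI[of _ s1] exI[of _ t1]) simp
qed

lemma abs_helper: "\<bar>x - p\<bar> < \<bar>p - q\<bar> / 2 \<Longrightarrow> \<bar>y - q\<bar> < \<bar>p - q\<bar> / 2 \<Longrightarrow> x = y \<Longrightarrow> False"
  for x y p q :: real by (cases "p \<le> q"; cases "x \<le> p"; cases "y \<le> q") auto

lemma schwarz:
  fixes g :: "'a::euclidean_space \<Rightarrow> real"
  assumes U: "open U" and u: "u \<in> U" and C2: "Ck_on 2 U g" and a: "a \<in> Basis" and b: "b \<in> Basis"
  shows "dd (\<lambda>x. dd g a x) b u = dd (\<lambda>x. dd g b x) a u"
proof (rule ccontr)
  let ?g12 = "\<lambda>x. dd (\<lambda>x. dd g a x) b x" and ?g21 = "\<lambda>x. dd (\<lambda>x. dd g b x) a x"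
  assume ne: "?g12 u \<noteq> ?g21 u"
  define d where "d = \<bar>?g12 u - ?g21 u\<bar>"
  have d: "d > 0" using ne unfolding d_def by simp
  have c12: "continuous_on U ?g12" using C2 a b by (simp add: numeral_2_eq_2)
  have c21: "continuous_on U ?g21" using C2 a b by (simp add: numeral_2_eq_2)
  obtain r where r: "r > 0" "ball u r \<subseteq> U" using U u open_contains_ball by blast
  obtain d1 where d1: "d1 > 0" "\<And>x. x \<in> U \<Longrightarrow> dist x u < d1 \<Longrightarrow> dist (?g12 x) (?g12 u) < d/2"
    using c12 u d unfolding continuous_on_iff by (meson half_gt_zero)
  obtain d2 where d2: "d2 > 0" "\<And>x. x \<in> U \<Longrightarrow> dist x u < d2 \<Longrightarrow> dist (?g21 x) (?g21 u) < d/2"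
    using c21 u d unfolding continuous_on_iff by (meson half_gt_zero)
  define h where "h = min r (min d1 d2) / 4"
  have h: "h > 0" using r d1 d2 unfolding h_def by simp
  have near: "dist (u + s *\<^sub>R p + t *\<^sub>R q) u \<le> 2 * h"
    if "p \<in> Basis" "q \<in> Basis" "0 \<le> s" "s \<le> h" "0 \<le> t" "t \<le> h" for s t p q
  proof -
    have "dist (u + s *\<^sub>R p + t *\<^sub>R q) u = norm (s *\<^sub>R p + t *\<^sub>R q)" by (simp add: dist_norm)
    also have "\<dots> \<le> norm (s *\<^sub>R p) + norm (t *\<^sub>R q)" by (rule norm_triangle_ineq)
    also have "\<dots> = s + t" using that by simp
    finally show ?thesis using that by simp
  qed
  have hr: "2 * h < r" "2 * h < d1" "2 * h < d2" using h unfolding h_def by auto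
  have box: "u + s *\<^sub>R p + t *\<^sub>R q \<in> U"
    if "p \<in> Basis" "q \<in> Basis" "0 \<le> s" "s \<le> h" "0 \<le> t" "t \<le> h" for s t p q
    using near[OF that] hr r(2) by (auto simp: dist_commute)
  obtain s t where st: "0 < s" "s < h" "0 < t" "t < h"
    "g (u + h *\<^sub>R a + h *\<^sub>R b) - g (u + h *\<^sub>R a) - g (u + h *\<^sub>R b) + g u
       = h * h * ?g12 (u + s *\<^sub>R a + t *\<^sub>R b)"
    using mvt_mixed[OF U C2 a b h, of u] box[OF a b] by blast
  obtain s' t' where st': "0 < s'" "s' < h" "0 < t'" "t' < h"
    "g (u + h *\<^sub>R b + h *\<^sub>R a) - g (u + h *\<^sub>R b) - g (u + h *\<^sub>R a) + g u
       = h * h * ?g21 (u + s' *\<^sub>R b + t' *\<^sub>R a)"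
    using mvt_mixed[OF U C2 b a h, of u] box[OF b a] by blast
  have "g (u + h *\<^sub>R b + h *\<^sub>R a) = g (u + h *\<^sub>R a + h *\<^sub>R b)" by (simp add: algebra_simps)
  then have "h * h * ?g12 (u + s *\<^sub>R a + t *\<^sub>R b) = h * h * ?g21 (u + s' *\<^sub>R b + t' *\<^sub>R a)"
    using st(5) st'(5) by linarith
  then have eq: "?g12 (u + s *\<^sub>R a + t *\<^sub>R b) = ?g21 (u + s' *\<^sub>R b + t' *\<^sub>R a)" using h by simp
  have n1: "dist (u + s *\<^sub>R a + t *\<^sub>R b) u \<le> 2 * h" using near[OF a b, of s t] st by simp
  have n2: "dist (u + s' *\<^sub>R b + t' *\<^sub>R a) u \<le> 2 * h" using near[OF b a, of s' t'] st' by simp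
  have m1: "u + s *\<^sub>R a + t *\<^sub>R b \<in> U" using box[OF a b, of s t] st by simp
  have m2: "u + s' *\<^sub>R b + t' *\<^sub>R a \<in> U" using box[OF b a, of s' t'] st' by simp
  have x1: "dist (?g12 (u + s *\<^sub>R a + t *\<^sub>R b)) (?g12 u) < d/2"
    using d1(2)[OF m1] n1 hr by linarith
  have x2: "dist (?g21 (u + s' *\<^sub>R b + t' *\<^sub>R a)) (?g21 u) < d/2"
    using d2(2)[OF m2] n2 hr by linarith
  show False using abs_helper[OF x1[unfolded d_def dist_real_def] x2[unfolded d_def dist_real_def] eq] .
qed



definition Ginv :: "real \<Rightarrow> real \<Rightarrow> real^3^3" where
  "Ginv eps fv = (\<chi> i j. if i = 1 \<and> j = 1 then -fv else if (i = 1 \<and> j = 3) \<or> (i = 3 \<and> j = 1) then 1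
      else if i = 2 \<and> j = 2 then eps else 0)"

lemma matrix_inv_eqI:
  fixes A B :: "real^3^3"
  assumes "A ** B = mat 1" "B ** A = mat 1"
  shows "matrix_inv A = B"
  unfolding matrix_inv_def
proof (rule some_equality)
  show "A ** B = mat 1 \<and> B ** A = mat 1" using assms by simp
  fix A' :: "real^3^3" assume "A ** A' = mat 1 \<and> A' ** A = mat 1"
  then have "A' = (A' ** A) ** B" by (metis assms(1) matrix_mul_assoc matrix_mul_rid)
  then show "A' = B" using \<open>A ** A' = mat 1 \<and> A' ** A = mat 1\<close> by simp
qed

lemma minv:
  assumes eps: "eps = 1 \<or> eps = -1"
  shows "matrix_inv (metric_g eps f p) = Ginv eps (f (xy p))"
proof (rule matrix_inv_eqI)
  have e: "eps * eps = 1" using eps by auto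
  show "metric_g eps f p ** Ginv eps (f (xy p)) = mat 1"
    by (simp add: metric_g_def Ginv_def matrix_matrix_mult_def mat_def vec_eq_iff forall_3 sum_3 e)
  show "Ginv eps (f (xy p)) ** metric_g eps f p = mat 1"
    by (simp add: metric_g_def Ginv_def matrix_matrix_mult_def mat_def vec_eq_iff forall_3 sum_3 e)
qed

lemma pd_metric:
  assumes fd: "f differentiable at (xy p)"
  shows "pd k (\<lambda>q. metric_g eps f q $ i $ j) p =
           (if i = 3 \<and> j = 3 then dd f (xy (axis k 1)) (xy p) else 0)"
proof (cases "i = 3 \<and> j = 3")
  case True
  have lx: "bounded_linear xy" using xy_linear linear_conv_bounded_linear by blast
  have "((\<lambda>q. f (xy q)) has_derivative (\<lambda>w. dd f (xy w) (xy p))) (at p)"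
    using diff_chain_at[OF bounded_linear.has_derivative[OF lx has_derivative_ident]
        frechet_derivative_works[THEN iffD1, OF fd]] by (simp add: o_def)
  moreover have "(\<lambda>q. metric_g eps f q $ i $ j) = (\<lambda>q. f (xy q))"
    using True by (simp add: metric_g_def)
  ultimately show ?thesis using True unfolding pd_def by (metis frechet_derivative_at)
next
  case False
  have "(\<lambda>q. metric_g eps f q $ i $ j) = (\<lambda>q. metric_g eps f 0 $ i $ j)"
    using False by (auto simp: metric_g_def)
  then show ?thesis using False unfolding pd_def
    by (metis frechet_derivative_at has_derivative_const)
qed

lemma xy_axis: "xy (axis 1 1) = 0" "xy (axis 2 1) = axis 1 1" "xy (axis 3 1) = axis 2 1"
  by (auto simp: xy_def vec_eq_iff forall_2 axis_def)

lemma chr3: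
  assumes eps: "eps = 1 \<or> eps = -1" and fd: "f differentiable at (xy p)"
  shows "christoffel eps f 3 i j p = 0"
proof -
  have z: "dd f 0 (xy p) = 0" using linear_0[OF linear_frechet_derivative[OF fd]] .
  show ?thesis
    unfolding christoffel_def minv[OF eps] pd_metric[OF fd]
    by (simp add: Ginv_def sum_3 xy_axis z)
qed

lemma chr2:
  assumes eps: "eps = 1 \<or> eps = -1" and fd: "f differentiable at (xy p)"
  shows "christoffel eps f 2 i j p = (if i = 3 \<and> j = 3 then -(eps/2) * pd 1 f (xy p) else 0)"
proof -
  have z: "dd f 0 (xy p) = 0" using linear_0[OF linear_frechet_derivative[OF fd]] .
  show ?thesis
    unfolding christoffel_def minv[OF eps] pd_metric[OF fd]
    by (simp add: Ginv_def sum_3 xy_axis z pd_def)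
qed

lemma covD3:
  assumes eps: "eps = 1 \<or> eps = -1" and fd: "f differentiable at (xy (phi u))"
  shows "covD eps f phi V u w $ 3 = dd V w u $ 3"
  unfolding covD_def by (simp add: chr3[OF eps fd])

lemma covD2:
  assumes eps: "eps = 1 \<or> eps = -1" and fd: "f differentiable at (xy (phi u))"
  shows "covD eps f phi V u w $ 2 = dd V w u $ 2 - eps / 2 * pd 1 f (xy (phi u)) * (dd phi w u $ 3) * (V u $ 3)"
  unfolding covD_def by (simp add: chr2[OF eps fd] sum_3)

lemma gprod_eq: "gprod eps f p V W = V$1 * W$3 + eps * V$2 * W$2 + V$3 * (W$1 + f (xy p) * W$3)"
  by (simp add: gprod_def metric_g_def inner_vec_def matrix_vector_mult_def sum_3 algebra_simps)

lemma nf_comp: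
  "normal_field f phi v1 v2 v3 u $ 2 = v1 u"
  "normal_field f phi v1 v2 v3 u $ 3 = (v2 u - v3 u) / sqrt 2"
  by (simp_all add: normal_field_def e1_def e2_def e3_def axis_def diff_divide_distrib add_divide_distrib)



lemma dd_works: "h differentiable at x \<Longrightarrow> (h has_derivative (\<lambda>w. dd h w x)) (at x)"
  using frechet_derivative_works by blast

lemma dd_eq_has:
  assumes "(g has_derivative g') (at u)" "open S" "u \<in> S" "\<And>x. x \<in> S \<Longrightarrow> f x = g x"
  shows "dd f v u = g' v"
proof -
  have "(f has_derivative g') (at u)"
    by (rule has_derivative_transform_within_open[OF assms(1) assms(2) assms(3)]) (simp add: assms(4))
  then show ?thesis by (metis frechet_derivative_at)
qed

lemma Ck_minus_fun:
  fixes f g :: "'a::euclidean_space \<Rightarrow> real"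
  shows "open S \<Longrightarrow> Ck_on k S f \<Longrightarrow> Ck_on k S g \<Longrightarrow> Ck_on k S (\<lambda>x. f x - g x)"
proof (induction k arbitrary: f g)
  case 0
  then show ?case by (simp add: continuous_on_diff)
next
  case (Suc k)
  have df: "f differentiable at x" "g differentiable at x" if "x \<in> S" for x
    using Ck_diff Suc.prems that by blast+
  have "Ck_on k S (\<lambda>x. dd (\<lambda>y. f y - g y) b x)" if b: "b \<in> Basis" for b
  proof (rule Ck_cong[OF Suc.prems(1)])
    show "Ck_on k S (\<lambda>x. dd f b x - dd g b x)"
      using Suc.IH[OF Suc.prems(1)] Suc.prems(2,3) b by simp
    show "dd f b x - dd g b x = dd (\<lambda>y. f y - g y) b x" if "x \<in> S" for x
      using dd_eq_has[OF has_derivative_diff[OF dd_works[OF df(1)[OF that]] dd_works[OF df(2)[OF that]]]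
          Suc.prems(1) that, of "\<lambda>y. f y - g y" b] by simp
  qed
  moreover have "(\<lambda>x. f x - g x) differentiable_on S"
    unfolding differentiable_on_eq_differentiable_at[OF Suc.prems(1)]
    using df by simp
  ultimately show ?case by simp
qed

lemma Ck_mono_set:
  shows "open T \<Longrightarrow> T \<subseteq> S \<Longrightarrow> Ck_on k S h \<Longrightarrow> Ck_on k T h"
proof (induction k arbitrary: h)
  case 0
  then show ?case using continuous_on_subset by simp
next
  case (Suc k)
  have "Ck_on k T (\<lambda>x. dd h b x)" if b: "b \<in> Basis" for b
    using Suc.IH[OF Suc.prems(1,2)] Suc.prems(3) b by simp
  moreover have "h differentiable_on S" using Suc.prems(3) by simp
  then have "h differentiable_on T" by (rule differentiable_on_subset[OF _ Suc.prems(2)])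
  ultimately show ?case by simp
qed

lemma sym_from_eq:
  fixes p :: "'a::euclidean_space \<Rightarrow> real"
  assumes U: "open U" and x: "x \<in> U" and a: "a \<in> Basis" and b: "b \<in> Basis" and C2: "Ck_on 2 U p"
    and eP: "\<And>y. y \<in> U \<Longrightarrow> dd p a y = P y" and eQ: "\<And>y. y \<in> U \<Longrightarrow> dd p b y = Q y"
    and dP: "(P has_derivative P') (at x)" and dQ: "(Q has_derivative Q') (at x)"
  shows "P' b = Q' a"
proof -
  have "dd (\<lambda>y. dd p a y) b x = dd (\<lambda>y. dd p b y) a x" by (rule schwarz[OF U x C2 a b])
  moreover have "dd (\<lambda>y. dd p a y) b x = P' b" by (rule dd_eq_has[OF dP U x eP])
  moreover have "dd (\<lambda>y. dd p b y) a x = Q' a" by (rule dd_eq_has[OF dQ U x eQ])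
  ultimately show ?thesis by simp
qed

lemma alg2:
  fixes k0 F C Ya Yb Xa Xb Fa Fb Ca Cb Yab Yba Xab Xba l la lb G H s :: real
  assumes "k0*(Fb*C*Ya + F*Cb*Ya + F*C*Yab) - (lb*Xa + l*Xab) = k0*(Fa*C*Yb + F*Ca*Yb + F*C*Yba) - (la*Xb + l*Xba)"
    "Fb = Xb*G + Yb*H" "Fa = Xa*G + Ya*H" "Cb = -(s*l*Yb)" "Ca = -(s*l*Ya)" "Yab = Yba" "Xab = Xba"
  shows "lb*Xa - la*Xb = -(k0*C*G*(Xa*Yb - Xb*Ya))"
  using assms by algebra

lemma alg3:
  fixes la lb Xa Xb Ya Yb k0 C G :: real
  assumes "la*Yb = lb*Ya" "lb*Xa - la*Xb = -(k0*C*G*(Xa*Yb - Xb*Ya))" "Xa*Yb - Xb*Ya \<noteq> 0"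
  shows "la = -(k0*C*G*Ya)" "lb = -(k0*C*G*Yb)"
proof -
  have "(Xa*Yb - Xb*Ya) * (la + k0*C*G*Ya) = 0" using assms(1,2) by algebra
  then have "la + k0*C*G*Ya = 0" using assms(3) by simp
  then show "la = -(k0*C*G*Ya)" by linarith
  have "(Xa*Yb - Xb*Ya) * (lb + k0*C*G*Yb) = 0" using assms(1,2) by algebra
  then have "lb + k0*C*G*Yb = 0" using assms(3) by simp
  then show "lb = -(k0*C*G*Yb)" by linarith
qed

lemma alg4:
  fixes k0 C G Ya Yb Ca Cb Ga Gb Yab Yba s l Xa Xb K L :: real
  assumes "-(k0*(Cb*G*Ya + C*Gb*Ya + C*G*Yab)) = -(k0*(Ca*G*Yb + C*Ga*Yb + C*G*Yba))"
    "Cb = -(s*l*Yb)" "Ca = -(s*l*Ya)" "Gb = Xb*K + Yb*L" "Ga = Xa*K + Ya*L" "Yab = Yba"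
  shows "k0*C*K*(Xa*Yb - Xb*Ya) = 0"
  using assms by algebra


lemma alg1:
  fixes s l Yab Yba lb la Ya Yb :: real
  assumes "-(s*(l*Yab + lb*Ya)) = -(s*(l*Yba + la*Yb))" "Yab = Yba" "s \<noteq> 0"
  shows "la*Yb = lb*Ya"
proof -
  have "s*(lb*Ya - la*Yb) = 0" using assms(1,2) by algebra
  then have "lb*Ya - la*Yb = 0" using assms(3) by simp
  then show ?thesis by linarith
qed

lemma core:
  fixes phi :: "real^2 \<Rightarrow> real^3" and f :: "real^2 \<Rightarrow> real" and v1 v2 v3 lam :: "real^2 \<Rightarrow> real"
    and k0 :: real
  assumes U: "open U" and u0: "u0 \<in> U" and W: "open W" and phiW: "\<And>x. x \<in> U \<Longrightarrow> xy (phi x) \<in> W"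
    and fs: "smooth_fun_on W f" and ps: "smooth_fun_on U phi"
    and sv1: "smooth_fun_on U v1" and sv2: "smooth_fun_on U v2" and sv3: "smooth_fun_on U v3"
    and sl: "smooth_fun_on U lam"
    and HY: "\<And>x w. x \<in> U \<Longrightarrow> dd v2 w x - dd v3 w x = -(sqrt 2 * lam x * dd (\<lambda>y. phi y $ 3) w x)"
    and HX: "\<And>x w. x \<in> U \<Longrightarrow> dd v1 w x = k0 * pd 1 f (xy (phi x)) * (v2 x - v3 x) * dd (\<lambda>y. phi y $ 3) w x
                                    - lam x * dd (\<lambda>y. phi y $ 2) w x"
    and c0: "v2 u0 \<noteq> v3 u0" and k0: "k0 \<noteq> 0"
    and D0: "dd (\<lambda>y. phi y $ 2) (axis 1 1) u0 * dd (\<lambda>y. phi y $ 3) (axis 2 1) u0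
             - dd (\<lambda>y. phi y $ 2) (axis 2 1) u0 * dd (\<lambda>y. phi y $ 3) (axis 1 1) u0 \<noteq> 0"
  shows "pd 1 (pd 1 (pd 1 f)) (xy (phi u0)) = 0"
proof -
  define a :: "real^2" where "a = axis 1 1"
  define b :: "real^2" where "b = axis 2 1"
  have ab: "a \<in> Basis" "b \<in> Basis" unfolding a_def b_def by simp_all
  define X where "X = (\<lambda>y. phi y $ 2)"
  define Y where "Y = (\<lambda>y. phi y $ 3)"
  define C where "C = (\<lambda>y. v2 y - v3 y)"
  define F where "F = (\<lambda>y. pd 1 f (xy (phi y)))"
  define G where "G = (\<lambda>y. pd 1 (pd 1 f) (xy (phi y)))"
  have sX: "smooth_fun_on U X" unfolding X_def by (rule smooth_component[OF U ps])
  have sY: "smooth_fun_on U Y" unfolding Y_def by (rule smooth_component[OF U ps])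
  have sC: "smooth_fun_on U C" unfolding C_def
    using sv2 sv3 by (simp add: smooth_fun_on_def Ck_minus_fun[OF U])
  have dif: "h differentiable at y" if "smooth_fun_on U h" "y \<in> U" for h :: "real^2 \<Rightarrow> real" and y
    using smooth_diff[OF that(1) U that(2)] .
  have dif1: "(\<lambda>z. dd h c z) differentiable at y" if "smooth_fun_on U h" "c \<in> Basis" "y \<in> U"
    for h :: "real^2 \<Rightarrow> real" and c y
    using smooth_diff[OF smooth_dd[OF that(1,2)] U that(3)] .
  have C2: "Ck_on 2 U h" if "smooth_fun_on U h" for h :: "real^2 \<Rightarrow> real"
    using smooth_Ck[OF that] .
  have pf1: "pd 1 f = (\<lambda>z. dd f (axis 1 1) z)" by (simp add: pd_def fun_eq_iff)
  have sf1: "smooth_fun_on W (pd 1 f)" unfolding pf1 by (rule smooth_dd[OF fs]) simp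
  have pf2: "pd 1 (pd 1 f) = (\<lambda>z. dd (pd 1 f) (axis 1 1) z)" by (simp add: pd_def fun_eq_iff)
  have sf2: "smooth_fun_on W (pd 1 (pd 1 f))" unfolding pf2 by (rule smooth_dd[OF sf1]) simp
  have dpf1: "pd 1 f differentiable at (xy (phi y))" if "y \<in> U" for y
    using smooth_diff[OF sf1 W phiW[OF that]] .
  have dpf2: "pd 1 (pd 1 f) differentiable at (xy (phi y))" if "y \<in> U" for y
    using smooth_diff[OF sf2 W phiW[OF that]] .
  have dphi: "phi differentiable at y" if "y \<in> U" for y
    using smooth_diff[OF ps U that] .
  have dF: "F differentiable at y" "dd F w y = dd X w y * G y + dd Y w y * pd 2 (pd 1 f) (xy (phi y))"
    if "y \<in> U" for y w
    using chain_xy[OF dpf1[OF that] dphi[OF that]] unfolding F_def G_def X_def Y_def by simp_all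
  have dG: "G differentiable at y"
    "dd G w y = dd X w y * pd 1 (pd 1 (pd 1 f)) (xy (phi y)) + dd Y w y * pd 2 (pd 1 (pd 1 f)) (xy (phi y))"
    if "y \<in> U" for y w
    using chain_xy[OF dpf2[OF that] dphi[OF that]] unfolding G_def X_def Y_def by simp_all
  have HC: "dd C w y = -(sqrt 2 * lam y * dd Y w y)" if "y \<in> U" for w y
  proof -
    have "dd C w y = dd v2 w y - dd v3 w y"
      using dd_eq_has[OF has_derivative_diff[OF dd_works[OF dif[OF sv2 that]] dd_works[OF dif[OF sv3 that]]]
          U that, of C w] unfolding C_def by simp
    then show ?thesis using HY[OF that, of w] unfolding Y_def by simp
  qed
  have HX': "dd v1 w y = k0 * F y * C y * dd Y w y - lam y * dd X w y" if "y \<in> U" for w y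
    using HX[OF that, of w] unfolding F_def C_def X_def Y_def .
  have symX: "dd (\<lambda>z. dd X a z) b y = dd (\<lambda>z. dd X b z) a y" if "y \<in> U" for y
    by (rule schwarz[OF U that C2[OF sX] ab])
  have symY: "dd (\<lambda>z. dd Y a z) b y = dd (\<lambda>z. dd Y b z) a y" if "y \<in> U" for y
    by (rule schwarz[OF U that C2[OF sY] ab])
  have dC: "C differentiable at y" if "y \<in> U" for y using dif[OF sC that] .

  have S1: "dd lam a y * dd Y b y = dd lam b y * dd Y a y" if y: "y \<in> U" for y
  proof -
    have eP: "\<And>z. z \<in> U \<Longrightarrow> dd C a z = -(sqrt 2 * lam z * dd Y a z)" using HC by blast
    have eQ: "\<And>z. z \<in> U \<Longrightarrow> dd C b z = -(sqrt 2 * lam z * dd Y b z)" using HC by blast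
    have dP: "((\<lambda>z. -(sqrt 2 * lam z * dd Y a z)) has_derivative
               (\<lambda>w. -(sqrt 2 * (lam y * dd (\<lambda>z. dd Y a z) w y + dd lam w y * dd Y a y)))) (at y)"
      by (auto intro!: derivative_eq_intros dd_works[OF dif[OF sl y]] dd_works[OF dif1[OF sY ab(1) y]]
          simp: algebra_simps)
    have dQ: "((\<lambda>z. -(sqrt 2 * lam z * dd Y b z)) has_derivative
               (\<lambda>w. -(sqrt 2 * (lam y * dd (\<lambda>z. dd Y b z) w y + dd lam w y * dd Y b y)))) (at y)"
      by (auto intro!: derivative_eq_intros dd_works[OF dif[OF sl y]] dd_works[OF dif1[OF sY ab(2) y]]
          simp: algebra_simps)
    have "-(sqrt 2 * (lam y * dd (\<lambda>z. dd Y a z) b y + dd lam b y * dd Y a y))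
          = -(sqrt 2 * (lam y * dd (\<lambda>z. dd Y b z) a y + dd lam a y * dd Y b y))"
      using sym_from_eq[OF U y ab C2[OF sC] eP eQ dP dQ] by simp
    then show ?thesis using alg1 symY[OF y] by simp
  qed

  have S2: "dd lam b y * dd X a y - dd lam a y * dd X b y
             = -(k0 * C y * G y * (dd X a y * dd Y b y - dd X b y * dd Y a y))" if y: "y \<in> U" for y
  proof -
    have eP: "\<And>z. z \<in> U \<Longrightarrow> dd v1 a z = k0 * F z * C z * dd Y a z - lam z * dd X a z" using HX' by blast
    have eQ: "\<And>z. z \<in> U \<Longrightarrow> dd v1 b z = k0 * F z * C z * dd Y b z - lam z * dd X b z" using HX' by blast
    have dP: "((\<lambda>z. k0 * F z * C z * dd Y a z - lam z * dd X a z) has_derivative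
               (\<lambda>w. k0 * (dd F w y * C y * dd Y a y + F y * dd C w y * dd Y a y + F y * C y * dd (\<lambda>z. dd Y a z) w y)
                   - (dd lam w y * dd X a y + lam y * dd (\<lambda>z. dd X a z) w y))) (at y)"
      by (auto intro!: derivative_eq_intros dd_works[OF dif[OF sl y]] dd_works[OF dif1[OF sY ab(1) y]]
          dd_works[OF dif1[OF sX ab(1) y]] dd_works[OF dF(1)[OF y]] dd_works[OF dC[OF y]]
          simp: algebra_simps)
    have dQ: "((\<lambda>z. k0 * F z * C z * dd Y b z - lam z * dd X b z) has_derivative
               (\<lambda>w. k0 * (dd F w y * C y * dd Y b y + F y * dd C w y * dd Y b y + F y * C y * dd (\<lambda>z. dd Y b z) w y)
                   - (dd lam w y * dd X b y + lam y * dd (\<lambda>z. dd X b z) w y))) (at y)"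
      by (auto intro!: derivative_eq_intros dd_works[OF dif[OF sl y]] dd_works[OF dif1[OF sY ab(2) y]]
          dd_works[OF dif1[OF sX ab(2) y]] dd_works[OF dF(1)[OF y]] dd_works[OF dC[OF y]]
          simp: algebra_simps)
    have eq: "k0 * (dd F b y * C y * dd Y a y + F y * dd C b y * dd Y a y + F y * C y * dd (\<lambda>z. dd Y a z) b y)
                   - (dd lam b y * dd X a y + lam y * dd (\<lambda>z. dd X a z) b y)
            = k0 * (dd F a y * C y * dd Y b y + F y * dd C a y * dd Y b y + F y * C y * dd (\<lambda>z. dd Y b z) a y)
                   - (dd lam a y * dd X b y + lam y * dd (\<lambda>z. dd X b z) a y)"
      using sym_from_eq[OF U y ab C2[OF sv1] eP eQ dP dQ] by simp
    show ?thesis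
      by (rule alg2[OF eq dF(2)[OF y] dF(2)[OF y] HC[OF y] HC[OF y] symY[OF y] symX[OF y]])
  qed

  define D where "D y = dd X a y * dd Y b y - dd X b y * dd Y a y" for y
  define U' where "U' = {y \<in> U. D y \<noteq> 0}"
  have cD: "continuous_on U D"
  proof -
    have c: "continuous_on U (\<lambda>z. dd h c z)" if "smooth_fun_on U h" "c \<in> Basis" for h :: "real^2 \<Rightarrow> real" and c
      using Ck_cont[OF smooth_Ck[OF smooth_dd[OF that]]] .
    show ?thesis unfolding D_def
      by (intro continuous_on_diff continuous_on_mult c sX sY ab)
  qed
  have oU': "open U'"
  proof -
    have "U' = U \<inter> D -` (-{0})" unfolding U'_def by auto
    then show ?thesis using continuous_open_preimage[OF cD U] by auto
  qed
  have U'U: "U' \<subseteq> U" unfolding U'_def by auto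
  have u0': "u0 \<in> U'" unfolding U'_def D_def a_def b_def X_def Y_def using u0 D0 by simp
  have S3: "dd lam a y = -(k0 * C y * G y * dd Y a y)" "dd lam b y = -(k0 * C y * G y * dd Y b y)"
    if y: "y \<in> U'" for y
  proof -
    have yU: "y \<in> U" and Dy: "dd X a y * dd Y b y - dd X b y * dd Y a y \<noteq> 0"
      using y unfolding U'_def D_def by auto
    show "dd lam a y = -(k0 * C y * G y * dd Y a y)" by (rule alg3(1)[OF S1[OF yU] S2[OF yU] Dy])
    show "dd lam b y = -(k0 * C y * G y * dd Y b y)" by (rule alg3(2)[OF S1[OF yU] S2[OF yU] Dy])
  qed
  have C2l: "Ck_on 2 U' lam" by (rule Ck_mono_set[OF oU' U'U C2[OF sl]])
  have dP: "((\<lambda>z. -(k0 * C z * G z * dd Y a z)) has_derivative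
             (\<lambda>w. -(k0 * (dd C w u0 * G u0 * dd Y a u0 + C u0 * dd G w u0 * dd Y a u0
                 + C u0 * G u0 * dd (\<lambda>z. dd Y a z) w u0)))) (at u0)"
    by (auto intro!: derivative_eq_intros dd_works[OF dC[OF u0]] dd_works[OF dG(1)[OF u0]]
        dd_works[OF dif1[OF sY ab(1) u0]] simp: algebra_simps)
  have dQ: "((\<lambda>z. -(k0 * C z * G z * dd Y b z)) has_derivative
             (\<lambda>w. -(k0 * (dd C w u0 * G u0 * dd Y b u0 + C u0 * dd G w u0 * dd Y b u0
                 + C u0 * G u0 * dd (\<lambda>z. dd Y b z) w u0)))) (at u0)"
    by (auto intro!: derivative_eq_intros dd_works[OF dC[OF u0]] dd_works[OF dG(1)[OF u0]]
        dd_works[OF dif1[OF sY ab(2) u0]] simp: algebra_simps)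
  have eq: "-(k0 * (dd C b u0 * G u0 * dd Y a u0 + C u0 * dd G b u0 * dd Y a u0
                 + C u0 * G u0 * dd (\<lambda>z. dd Y a z) b u0))
          = -(k0 * (dd C a u0 * G u0 * dd Y b u0 + C u0 * dd G a u0 * dd Y b u0
                 + C u0 * G u0 * dd (\<lambda>z. dd Y b z) a u0))"
    using sym_from_eq[OF oU' u0' ab C2l S3(1) S3(2) dP dQ] by simp
  have fin: "k0 * C u0 * pd 1 (pd 1 (pd 1 f)) (xy (phi u0)) * D u0 = 0"
    unfolding D_def
    by (rule alg4[OF eq HC[OF u0] HC[OF u0] dG(2)[OF u0] dG(2)[OF u0] symY[OF u0]])
  have "C u0 \<noteq> 0" using c0 unfolding C_def by simp
  moreover have "D u0 \<noteq> 0" using u0' unfolding U'_def by simp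
  ultimately show ?thesis using fin k0 by simp
qed



lemma e2_eq: "e2 f p = ((2 - f (xy p)) / (2 * sqrt 2)) *\<^sub>R axis 1 1 + (1 / sqrt 2) *\<^sub>R axis 3 1"
  by (simp add: e2_def vec_eq_iff forall_3 axis_def)
lemma e3_eq: "e3 f p = ((2 + f (xy p)) / (2 * sqrt 2)) *\<^sub>R axis 1 1 + (- 1 / sqrt 2) *\<^sub>R axis 3 1"
  by (simp add: e3_def vec_eq_iff forall_3 axis_def)

lemma kernel_vec:
  fixes L :: "real^2 \<Rightarrow> real^3"
  assumes lin: "linear L"
    and D: "L (axis 1 1) $ 2 * L (axis 2 1) $ 3 - L (axis 2 1) $ 2 * L (axis 1 1) $ 3 = 0"
  shows "\<exists>w. w \<noteq> 0 \<and> L w $ 2 = 0 \<and> L w $ 3 = 0"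
proof -
  define a :: "real^2" where "a = axis 1 1"
  define b :: "real^2" where "b = axis 2 1"
  have lc: "L (\<alpha> *\<^sub>R a + \<beta> *\<^sub>R b) $ k = \<alpha> * L a $ k + \<beta> * L b $ k" for \<alpha> \<beta> k
    by (simp add: linear_add[OF lin] linear_scale[OF lin])
  have nz: "\<alpha> *\<^sub>R a + \<beta> *\<^sub>R b \<noteq> 0" if "\<alpha> \<noteq> 0 \<or> \<beta> \<noteq> 0" for \<alpha> \<beta>
  proof
    assume "\<alpha> *\<^sub>R a + \<beta> *\<^sub>R b = 0"
    then have "(\<alpha> *\<^sub>R a + \<beta> *\<^sub>R b) $ 1 = 0" "(\<alpha> *\<^sub>R a + \<beta> *\<^sub>R b) $ 2 = 0" by simp_all
    then show False using that unfolding a_def b_def by (simp add: axis_def)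
  qed
  have D': "L a $ 2 * L b $ 3 - L b $ 2 * L a $ 3 = 0" using D unfolding a_def b_def .
  show ?thesis
  proof (cases "L a $ 3 \<noteq> 0 \<or> L b $ 3 \<noteq> 0")
    case True
    have "L ((L b $ 3) *\<^sub>R a + (- L a $ 3) *\<^sub>R b) $ 2 = 0" unfolding lc using D' by (simp add: algebra_simps)
    moreover have "L ((L b $ 3) *\<^sub>R a + (- L a $ 3) *\<^sub>R b) $ 3 = 0" unfolding lc by (simp add: algebra_simps)
    moreover have "(L b $ 3) *\<^sub>R a + (- L a $ 3) *\<^sub>R b \<noteq> 0" by (rule nz) (use True in auto)
    ultimately show ?thesis by blast
  next
    case F1: False
    show ?thesis
    proof (cases "L a $ 2 \<noteq> 0 \<or> L b $ 2 \<noteq> 0")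
      case True
      have "L ((L b $ 2) *\<^sub>R a + (- L a $ 2) *\<^sub>R b) $ 2 = 0" unfolding lc by (simp add: algebra_simps)
      moreover have "L ((L b $ 2) *\<^sub>R a + (- L a $ 2) *\<^sub>R b) $ 3 = 0" unfolding lc using F1 by simp
      moreover have "(L b $ 2) *\<^sub>R a + (- L a $ 2) *\<^sub>R b \<noteq> 0" by (rule nz) (use True in auto)
      ultimately show ?thesis by blast
    next
      case False
      have "L (1 *\<^sub>R a + 0 *\<^sub>R b) $ 2 = 0" unfolding lc using False by simp
      moreover have "L (1 *\<^sub>R a + 0 *\<^sub>R b) $ 3 = 0" unfolding lc using F1 by simp
      moreover have "1 *\<^sub>R a + 0 *\<^sub>R b \<noteq> 0" by (rule nz) simp
      ultimately show ?thesis by blast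
    qed
  qed
qed

lemma alg5: "s \<noteq> 0 \<Longrightarrow> -(A / s) = L * Y \<Longrightarrow> A = -(s * L * Y)" for s A L Y :: real
  by (simp add: field_simps)

lemma alg6: "s \<noteq> 0 \<Longrightarrow> -(A - e / 2 * P * Y * (C / s)) = L * X \<Longrightarrow> A = e / (2 * s) * P * C * Y - L * X"
  for s A e P Y C L X :: real
  by (simp add: field_simps)

theorem mainTheorem3:
  fixes N :: "(real^3) set" and eps delta :: real and f :: "real^2 \<Rightarrow> real"
    and U :: "(real^2) set" and phi :: "real^2 \<Rightarrow> real^3"
    and v1 v2 v3 lam :: "real^2 \<Rightarrow> real"
  assumes N_open: "open N"
    and eps: "eps = 1 \<or> eps = -1"
    and f_smooth: "smooth_fun_on (xy ` N) f"
    and U_open: "open U"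
    and phi_smooth: "smooth_fun_on U phi"
    and phi_N: "phi ` U \<subseteq> N"
    and immersion: "\<forall>u\<in>U. inj (frechet_derivative phi (at u))"
    and nondeg: "\<forall>u\<in>U. riemannian_at eps f phi u \<or> lorentzian_at eps f phi u"
    and v_smooth: "smooth_fun_on U v1" "smooth_fun_on U v2" "smooth_fun_on U v3"
    and delta: "delta = 1 \<or> delta = -1"
    and unit: "\<forall>u\<in>U. eps * (v1 u)^2 + (v2 u)^2 - (v3 u)^2 = delta"
    and normal: "\<forall>u\<in>U. \<forall>w. gprod eps f (phi u) (normal_field f phi v1 v2 v3 u)
                                 (frechet_derivative phi (at u) w) = 0"
    and lam_smooth: "smooth_fun_on U lam"
    and umbilical: "\<forall>u\<in>U. \<forall>w. - covD eps f phi (normal_field f phi v1 v2 v3) u w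
                                  = lam u *\<^sub>R frechet_derivative phi (at u) w"
    and v1_nz: "\<forall>u\<in>U. v1 u \<noteq> 0"
  shows "\<forall>u\<in>U. v3 u * (v2 u - v3 u)^2 * pd 1 (pd 1 (pd 1 f)) (xy (phi u)) = 0"
proof
  fix u0 assume u0: "u0 \<in> U"
  show "v3 u0 * (v2 u0 - v3 u0)^2 * pd 1 (pd 1 (pd 1 f)) (xy (phi u0)) = 0"
  proof (cases "v2 u0 = v3 u0")
    case True
    then show ?thesis by simp
  next
    case c0: False
    define W where "W = xy ` N"
    have W: "open W" unfolding W_def by (rule xy_open[OF N_open])
    have phiW: "xy (phi x) \<in> W" if "x \<in> U" for x using phi_N that unfolding W_def by auto
    have fsW: "smooth_fun_on W f" using f_smooth unfolding W_def .
    have s2: "sqrt 2 \<noteq> 0" by simp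
    define V where "V = normal_field f phi v1 v2 v3"
    have dphi: "phi differentiable at x" if "x \<in> U" for x using smooth_diff[OF phi_smooth U_open that] .
    have fd: "f differentiable at (xy (phi x))" if "x \<in> U" for x using smooth_diff[OF fsW W phiW[OF that]] .
    have dv: "v1 differentiable at x" "v2 differentiable at x" "v3 differentiable at x" "lam differentiable at x"
      if "x \<in> U" for x
      using smooth_diff[OF v_smooth(1) U_open that] smooth_diff[OF v_smooth(2) U_open that]
        smooth_diff[OF v_smooth(3) U_open that] smooth_diff[OF lam_smooth U_open that] by auto
    have dV: "V differentiable at x" if x: "x \<in> U" for x
    proof -
      have "V = (\<lambda>y. v1 y *\<^sub>R e1
           + v2 y *\<^sub>R (((2 - f (xy (phi y))) / (2 * sqrt 2)) *\<^sub>R axis 1 1 + (1 / sqrt 2) *\<^sub>R axis 3 1)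
           + v3 y *\<^sub>R (((2 + f (xy (phi y))) / (2 * sqrt 2)) *\<^sub>R axis 1 1 + (- 1 / sqrt 2) *\<^sub>R axis 3 1))"
        unfolding V_def by (simp add: fun_eq_iff normal_field_def e2_eq e3_eq)
      moreover have "(\<lambda>y. f (xy (phi y))) differentiable at x" using chain_xy(2)[OF fd[OF x] dphi[OF x]] .
      ultimately show ?thesis using dv[OF x] by simp
    qed
    have V3: "dd V w x $ 3 = (dd v2 w x - dd v3 w x) / sqrt 2" if x: "x \<in> U" for x w
    proof -
      have "dd V w x $ 3 = dd (\<lambda>y. V y $ 3) w x" using dd_component(1)[OF dV[OF x]] by simp
      also have "(\<lambda>y. V y $ 3) = (\<lambda>y. (v2 y - v3 y) / sqrt 2)" unfolding V_def by (simp add: nf_comp fun_eq_iff)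
      also have "dd (\<lambda>y. (v2 y - v3 y) / sqrt 2) w x = (dd v2 w x - dd v3 w x) / sqrt 2"
        by (rule dd_eq_has[OF bounded_linear.has_derivative[OF bounded_linear_divide
              has_derivative_diff[OF dd_works[OF dv(2)[OF x]] dd_works[OF dv(3)[OF x]]]] U_open x]) simp
      finally show ?thesis .
    qed
    have V2: "dd V w x $ 2 = dd v1 w x" if x: "x \<in> U" for x w
    proof -
      have "dd V w x $ 2 = dd (\<lambda>y. V y $ 2) w x" using dd_component(1)[OF dV[OF x]] by simp
      also have "(\<lambda>y. V y $ 2) = v1" unfolding V_def by (simp add: nf_comp fun_eq_iff)
      finally show ?thesis .
    qed
    have HY: "dd v2 w x - dd v3 w x = -(sqrt 2 * lam x * dd (\<lambda>y. phi y $ 3) w x)" if x: "x \<in> U" for x w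
    proof -
      have "(- covD eps f phi V x w) $ 3 = (lam x *\<^sub>R dd phi w x) $ 3" using umbilical x unfolding V_def by simp
      then have "-((dd v2 w x - dd v3 w x) / sqrt 2) = lam x * dd (\<lambda>y. phi y $ 3) w x"
        using covD3[of eps f phi x, OF eps fd[OF x]] V3[OF x] dd_component(1)[OF dphi[OF x]] by simp
      then show ?thesis using alg5[OF s2] by blast
    qed
    have HX: "dd v1 w x = eps / (2 * sqrt 2) * pd 1 f (xy (phi x)) * (v2 x - v3 x) * dd (\<lambda>y. phi y $ 3) w x
                  - lam x * dd (\<lambda>y. phi y $ 2) w x" if x: "x \<in> U" for x w
    proof -
      have "(- covD eps f phi V x w) $ 2 = (lam x *\<^sub>R dd phi w x) $ 2" using umbilical x unfolding V_def by simp
      then have "-(dd v1 w x - eps / 2 * pd 1 f (xy (phi x)) * dd (\<lambda>y. phi y $ 3) w x * ((v2 x - v3 x) / sqrt 2))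
                 = lam x * dd (\<lambda>y. phi y $ 2) w x"
        using covD2[of eps f phi x, OF eps fd[OF x]] V2[OF x] dd_component(1)[OF dphi[OF x]] unfolding V_def
        by (simp add: nf_comp)
      then show ?thesis using alg6[OF s2] by blast
    qed
    have k0: "eps / (2 * sqrt 2) \<noteq> 0" using eps by auto
    have D0: "dd (\<lambda>y. phi y $ 2) (axis 1 1) u0 * dd (\<lambda>y. phi y $ 3) (axis 2 1) u0
             - dd (\<lambda>y. phi y $ 2) (axis 2 1) u0 * dd (\<lambda>y. phi y $ 3) (axis 1 1) u0 \<noteq> 0"
    proof
      assume D: "dd (\<lambda>y. phi y $ 2) (axis 1 1) u0 * dd (\<lambda>y. phi y $ 3) (axis 2 1) u0
             - dd (\<lambda>y. phi y $ 2) (axis 2 1) u0 * dd (\<lambda>y. phi y $ 3) (axis 1 1) u0 = 0"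
      have lin: "linear (frechet_derivative phi (at u0))" using linear_frechet_derivative[OF dphi[OF u0]] .
      obtain w where w: "w \<noteq> 0" "dd phi w u0 $ 2 = 0" "dd phi w u0 $ 3 = 0"
        using kernel_vec[OF lin] D dd_component(1)[OF dphi[OF u0]] by auto
      have "gprod eps f (phi u0) (V u0) (dd phi w u0) = 0" using normal u0 unfolding V_def by simp
      then have "V u0 $ 3 * dd phi w u0 $ 1 = 0" using w by (simp add: gprod_eq)
      moreover have "V u0 $ 3 \<noteq> 0" using c0 unfolding V_def by (simp add: nf_comp)
      ultimately have "dd phi w u0 $ 1 = 0" by simp
      then have "dd phi w u0 = dd phi 0 u0" using w linear_0[OF lin] by (simp add: vec_eq_iff forall_3)
      then have "w = 0" using immersion u0 by (meson injD)
      then show False using w by simp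
    qed
    have "pd 1 (pd 1 (pd 1 f)) (xy (phi u0)) = 0"
      by (rule core[OF U_open u0 W phiW fsW phi_smooth v_smooth lam_smooth HY HX c0 k0 D0])
    then show ?thesis by simp
  qed
qed

end
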